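(* Let $X,Y\subset\mathbf{N}$ be two $n$-element sets, $f:X\to Y$ a bijection, and $\pi\in S_n$ the permutation order-isomorphic to $f$. Suppose $\pi\in H_k^+\cup H_k^-$ for some $k\in\mathbf{N}$. Then every partition of $X$ into intervals $J_1<J_2<\dots<J_r$ can be refined by a partition of $X$ into intervals $I_1<I_2<\dots<I_s$ such that $s\le r+(k-1)(r-1)$ and each image $f(I_i)$ is an interval in $Y$. Similarly, every partition of $Y$ into $r$ intervals can be refined by a partition of $Y$ into at most $r+(k-1)(r-1)$ intervals each of which is mapped by $f^{-1}$ onto an interval in $X$.
   Context: For $X=\{x_1<\dots<x_n\}$ and $Y=\{y_1<\dots<y_n\}$, the permutation $\pi\in S_n$ order-isomorphic to a bijection $f:X\to Y$ is defined by $\pi(i)=j\Leftrightarrow f(x_i)=y_j$. An interval in $X$ is a set $\{x_i,x_{i+1},\dots,x_j\}$ with $1\le i\le j\le n$; for sets $A<B$ means $a<b$ for all $a\in A,b\in B$. For $\sigma\in S_n,\tau\in S_m$, $\sigma\oplus\tau\in S_{n+m}$ equals $\sigma(i)$ at $i\le n$ and $n+\tau(i-n)$ at $i>n$; $\sigma\ominus\tau$ equals $m+\sigma(i)$ at $i\le n$ and $\tau(i-n)$ at $i>n$. A permutation is up-indecomposable (down-indecomposable) if it is not $\sigma\oplus\tau$ (not $\sigma\ominus\tau$) with $\sigma,\tau$ nonempty. Every $\pi$ has a unique decomposition $\pi=\sigma_1\oplus\dots\oplus\sigma_r$ into up-indecomposable blocks; $h^+(\pi)$ is the maximum block length; $h^-$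 is defined analogously with $\ominus$. $H_k^+=\{\pi:h^+(\pi)<k\}$, $H_k^-=\{\pi:h^-(\pi)<k\}$. *)

theory Defs
  imports Main
begin

text \<open>Permutations of length n are lists that enumerate {1..n} in one-line notation.\<close>

definition is_perm :: "nat list \<Rightarrow> bool" where
  "is_perm p \<longleftrightarrow> distinct p \<and> set p = {1..length p}"

definition oplus :: "nat list \<Rightarrow> nat list \<Rightarrow> nat list" where
  "oplus s t = s @ map (\<lambda>x. x + length s) t"

definition ominus :: "nat list \<Rightarrow> nat list \<Rightarrow> nat list" where
  "ominus s t = map (\<lambda>x. x + length t) s @ t"

definition up_indec :: "nat list \<Rightarrow> bool" where
  "up_indec p \<longleftrightarrow> is_perm p \<and>
     \<not> (\<exists>s t. is_perm s \<and> is_perm t \<and> s \<noteq> [] \<and> t \<noteq> [] \<and> p = oplus s t)"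

definition down_indec :: "nat list \<Rightarrow> bool" where
  "down_indec p \<longleftrightarrow> is_perm p \<and>
     \<not> (\<exists>s t. is_perm s \<and> is_perm t \<and> s \<noteq> [] \<and> t \<noteq> [] \<and> p = ominus s t)"

text \<open>Decomposition into nonempty indecomposable blocks (unique).\<close>

definition up_decomp :: "nat list \<Rightarrow> nat list list \<Rightarrow> bool" where
  "up_decomp p bs \<longleftrightarrow> (\<forall>b\<in>set bs. b \<noteq> [] \<and> up_indec b) \<and> foldr oplus bs [] = p"

definition down_decomp :: "nat list \<Rightarrow> nat list list \<Rightarrow> bool" where
  "down_decomp p bs \<longleftrightarrow> (\<forall>b\<in>set bs. b \<noteq> [] \<and> down_indec b) \<and> foldr ominus bs [] = p"

definition h_plus :: "nat list \<Rightarrow> nat" where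
  "h_plus p = Max (length ` set (THE bs. up_decomp p bs))"

definition h_minus :: "nat list \<Rightarrow> nat" where
  "h_minus p = Max (length ` set (THE bs. down_decomp p bs))"

definition H_plus :: "nat \<Rightarrow> nat list set" where
  "H_plus k = {p. is_perm p \<and> h_plus p < k}"

definition H_minus :: "nat \<Rightarrow> nat list set" where
  "H_minus k = {p. is_perm p \<and> h_minus p < k}"

text \<open>The permutation order-isomorphic to f : X \<rightarrow> Y: p(i) = j iff f(x_i) = y_j (1-indexed).\<close>

definition order_iso_perm :: "nat set \<Rightarrow> nat set \<Rightarrow> (nat \<Rightarrow> nat) \<Rightarrow> nat list \<Rightarrow> bool" where
  "order_iso_perm X Y f p \<longleftrightarrow> is_perm p \<and> length p = card X \<and>
     (\<forall>i<length p. sorted_list_of_set Y ! (p ! i - 1) = f (sorted_list_of_set X ! i))"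

definition is_interval :: "nat set \<Rightarrow> nat set \<Rightarrow> bool" where
  "is_interval X S \<longleftrightarrow> (\<exists>a\<in>X. \<exists>b\<in>X. a \<le> b \<and> S = X \<inter> {a..b})"

definition set_less :: "nat set \<Rightarrow> nat set \<Rightarrow> bool" where
  "set_less A B \<longleftrightarrow> (\<forall>a\<in>A. \<forall>b\<in>B. a < b)"

definition interval_partition :: "nat set \<Rightarrow> nat set list \<Rightarrow> bool" where
  "interval_partition X Js \<longleftrightarrow> (\<forall>J\<in>set Js. is_interval X J) \<and>
     sorted_wrt set_less Js \<and> \<Union>(set Js) = X"

definition refines :: "nat set list \<Rightarrow> nat set list \<Rightarrow> bool" where
  "refines Is Js \<longleftrightarrow> (\<forall>I\<in>set Is. \<exists>J\<in>set Js. I \<subseteq> J)"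

end

theory Submission
  imports Defs
begin

lemma is_perm_Nil[simp]: "is_perm []" by (simp add: is_perm_def)

lemma oplus_Nil1[simp]: "oplus [] t = t" by (simp add: oplus_def)
lemma oplus_Nil2[simp]: "oplus s [] = s" by (simp add: oplus_def)
lemma ominus_Nil1[simp]: "ominus [] t = t" by (simp add: ominus_def)
lemma ominus_Nil2[simp]: "ominus s [] = s" by (simp add: ominus_def)
lemma length_oplus[simp]: "length (oplus s t) = length s + length t" by (simp add: oplus_def)
lemma length_ominus[simp]: "length (ominus s t) = length s + length t" by (simp add: ominus_def)

lemma is_perm_oplus:
  assumes "is_perm s" "is_perm t" shows "is_perm (oplus s t)"
proof -
  have d: "distinct s" "distinct t" and ss: "set s = {1..length s}" and st: "set t = {1..length t}"
    using assms by (auto simp: is_perm_def)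
  have "set (map (\<lambda>x. x + length s) t) = {length s + 1..length s + length t}"
    using st by (auto simp: image_iff intro: bexI[where x="_ - length s"])
  moreover have "distinct (map (\<lambda>x. x + length s) t)" using d by (simp add: distinct_map inj_on_def)
  ultimately show ?thesis using d ss unfolding is_perm_def oplus_def by auto
qed

lemma is_perm_ominus:
  assumes "is_perm s" "is_perm t" shows "is_perm (ominus s t)"
proof -
  have d: "distinct s" "distinct t" and ss: "set s = {1..length s}" and st: "set t = {1..length t}"
    using assms by (auto simp: is_perm_def)
  have "set (map (\<lambda>x. x + length t) s) = {length t + 1..length t + length s}"
    using ss by (auto simp: image_iff intro: bexI[where x="_ - length t"])
  moreover have "distinct (map (\<lambda>x. x + length t) s)" using d by (simp add: distinct_map inj_on_def)
  ultimately show ?thesis using d st unfolding is_perm_def ominus_def by auto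
qed

lemma oplus_assoc: "oplus (oplus a b) c = oplus a (oplus b c)"
  by (simp add: oplus_def add.assoc)
lemma ominus_assoc: "ominus (ominus a b) c = ominus a (ominus b c)"
  by (simp add: ominus_def add.assoc add.commute add.left_commute)

lemma foldr_oplus_append: "foldr oplus (xs @ ys) [] = oplus (foldr oplus xs []) (foldr oplus ys [])"
  by (induction xs) (auto simp: oplus_assoc)
lemma foldr_ominus_append: "foldr ominus (xs @ ys) [] = ominus (foldr ominus xs []) (foldr ominus ys [])"
  by (induction xs) (auto simp: ominus_assoc)

lemma foldr_oplus_perm: "\<forall>b\<in>set bs. is_perm b \<Longrightarrow> is_perm (foldr oplus bs [])"
  by (induction bs) (auto intro: is_perm_oplus)
lemma foldr_ominus_perm: "\<forall>b\<in>set bs. is_perm b \<Longrightarrow> is_perm (foldr ominus bs [])"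
  by (induction bs) (auto intro: is_perm_ominus)

lemma up_decomp_exists: "is_perm p \<Longrightarrow> \<exists>bs. up_decomp p bs"
proof (induction "length p" arbitrary: p rule: less_induct)
  case less
  show ?case
  proof (cases "p = []")
    case True then show ?thesis by (intro exI[of _ "[]"]) (simp add: up_decomp_def)
  next
    case False
    show ?thesis
    proof (cases "up_indec p")
      case True then show ?thesis using False by (intro exI[of _ "[p]"]) (simp add: up_decomp_def)
    next
      case nd: False
      then obtain s t where st: "is_perm s" "is_perm t" "s \<noteq> []" "t \<noteq> []" "p = oplus s t"
        using less.prems unfolding up_indec_def by blast
      then have "length s < length p" "length t < length p" by auto
      then obtain bs cs where "up_decomp s bs" "up_decomp t cs" using less st by metis
      then show ?thesis using st
        by (intro exI[of _ "bs @ cs"]) (auto simp: up_decomp_def foldr_oplus_append simp del: foldr_append)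
    qed
  qed
qed

lemma down_decomp_exists: "is_perm p \<Longrightarrow> \<exists>bs. down_decomp p bs"
proof (induction "length p" arbitrary: p rule: less_induct)
  case less
  show ?case
  proof (cases "p = []")
    case True then show ?thesis by (intro exI[of _ "[]"]) (simp add: down_decomp_def)
  next
    case False
    show ?thesis
    proof (cases "down_indec p")
      case True then show ?thesis using False by (intro exI[of _ "[p]"]) (simp add: down_decomp_def)
    next
      case nd: False
      then obtain s t where st: "is_perm s" "is_perm t" "s \<noteq> []" "t \<noteq> []" "p = ominus s t"
        using less.prems unfolding down_indec_def by blast
      then have "length s < length p" "length t < length p" by auto
      then obtain bs cs where "down_decomp s bs" "down_decomp t cs" using less st by metis
      then show ?thesis using st
        by (intro exI[of _ "bs @ cs"]) (auto simp: down_decomp_def foldr_ominus_append simp del: foldr_append)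
    qed
  qed
qed

lemma image_minus_nat: "(\<lambda>x. x - (m::nat)) ` {m+1..c} = {1..c - m}"
  by (auto simp: image_iff intro!: bexI[where x="_ + m"])

lemma oplus_split_aux:
  assumes c: "is_perm c" and b: "is_perm b" and l: "length b < length c" and tk: "take (length b) c = b"
  shows "\<exists>t. is_perm t \<and> t \<noteq> [] \<and> c = oplus b t"
proof -
  define m where "m = length b"
  define d where "d = drop m c"
  have cbd: "c = b @ d" using tk unfolding d_def m_def by (metis append_take_drop_id)
  have dc: "distinct c" and sc: "set c = {1..length c}" and sb: "set b = {1..m}" using b c by (auto simp: is_perm_def m_def)
  have dd: "distinct d" and disj: "set b \<inter> set d = {}" using dc cbd by auto
  have "set d = set c - set b" using cbd disj by auto
  moreover have "{1..length c} - {1..m} = {m+1..length c}" by auto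
  ultimately have sd: "set d = {m+1..length c}" unfolding sc sb by simp
  define t where "t = map (\<lambda>x. x - m) d"
  have "map (\<lambda>x. x + m) t = d" unfolding t_def map_map by (rule map_idI) (use sd in auto)
  hence ct: "c = oplus b t" using cbd by (simp add: oplus_def m_def)
  have inj: "inj_on (\<lambda>x. x - m) (set d)" using sd by (auto simp: inj_on_def)
  have "distinct t" using dd inj by (simp add: t_def distinct_map)
  moreover have "set t = {1..length c - m}"
  proof -
    have "(\<lambda>x. x - m) ` {m+1..length c} = {1..length c - m}" by (rule image_minus_nat)
    then show ?thesis unfolding t_def using sd by (simp only: set_map)
  qed
  moreover have "length t = length c - m" unfolding t_def d_def by simp
  ultimately have "is_perm t" unfolding is_perm_def by simp
  moreover have "t \<noteq> []" unfolding t_def d_def using l m_def by simp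
  ultimately show ?thesis using ct by blast
qed

lemma ominus_split_aux:
  assumes c: "is_perm c" and b: "is_perm b" and l: "length b < length c"
    and tk: "take (length b) c = map (\<lambda>x. x + (length c - length b)) b"
  shows "\<exists>t. is_perm t \<and> t \<noteq> [] \<and> c = ominus b t"
proof -
  define m where "m = length b"
  define t where "t = drop m c"
  have lt: "length t = length c - m" by (simp add: t_def)
  have cbd: "c = map (\<lambda>x. x + length t) b @ t" using tk lt unfolding t_def m_def by (metis append_take_drop_id)
  have dc: "distinct c" and sc: "set c = {1..length c}" and sb: "set b = {1..m}" using b c by (auto simp: is_perm_def m_def)
  have dd: "distinct t" and disj: "set (map (\<lambda>x. x + length t) b) \<inter> set t = {}" using dc cbd by (metis distinct_append)+
  have sm: "set (map (\<lambda>x. x + length t) b) = {length t + 1..length c}"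
  proof -
    have "set (map (\<lambda>x. x + length t) b) = (\<lambda>x. x + length t) ` {1..m}" using sb by simp
    also have "\<dots> = {1 + length t..m + length t}" by (rule image_add_atLeastAtMost')
    also have "\<dots> = {length t + 1..length c}" using lt l m_def by (simp add: add.commute)
    finally show ?thesis .
  qed
  have "set t = set c - set (map (\<lambda>x. x + length t) b)" using cbd disj by auto
  moreover have "{1..length c} - {length t + 1..length c} = {1..length t}" using lt by auto
  ultimately have st: "set t = {1..length t}" unfolding sc sm by simp
  have "is_perm t" unfolding is_perm_def using dd st by simp
  moreover have "t \<noteq> []" using l lt m_def by auto
  moreover have "c = ominus b t" using cbd by (simp add: ominus_def)
  ultimately show ?thesis by blast
qed

lemma oplus_cancel_lt:
  assumes "up_indec b" "up_indec c" "oplus b r = oplus c r'" "length b < length c" "b \<noteq> []"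
  shows False
proof -
  have "take (length b) (oplus b r) = b" by (simp add: oplus_def)
  moreover have "take (length b) (oplus c r') = take (length b) c" using assms(4) by (simp add: oplus_def)
  ultimately have "take (length b) c = b" using assms(3) by simp
  then obtain t where "is_perm t" "t \<noteq> []" "c = oplus b t"
    using oplus_split_aux assms by (meson up_indec_def)
  then show False using assms(1,2,5) unfolding up_indec_def by blast
qed

lemma oplus_cancel:
  assumes "up_indec b" "up_indec c" "oplus b r = oplus c r'" "b \<noteq> []" "c \<noteq> []"
  shows "b = c \<and> r = r'"
proof -
  have "length b = length c" using oplus_cancel_lt assms by (metis linorder_neqE_nat)
  then have bc: "b = c" using assms(3) unfolding oplus_def by simp
  then have "map (\<lambda>x. x + length b) r = map (\<lambda>x. x + length b) r'" using assms(3) unfolding oplus_def by simp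
  then have "r = r'" by (simp add: inj_map_eq_map inj_on_def)
  with bc show ?thesis by simp
qed


lemma ominus_cancel_lt:
  assumes "down_indec b" "down_indec c" "ominus b r = ominus c r'" "length b < length c" "b \<noteq> []"
  shows False
proof -
  have len: "length b + length r = length c + length r'" using assms(3) by (metis length_ominus)
  have "take (length b) (ominus b r) = map (\<lambda>x. x + length r) b" by (simp add: ominus_def)
  moreover have "take (length b) (ominus c r') = map (\<lambda>x. x + length r') (take (length b) c)"
    using assms(4) by (simp add: ominus_def take_map)
  ultimately have "map (\<lambda>x. x + length r') (take (length b) c) = map (\<lambda>x. x + length r) b"
    using assms(3) by simp
  also have "\<dots> = map (\<lambda>x. x + length r') (map (\<lambda>x. x + (length c - length b)) b)"
  proof -
    have lr: "length r = length r' + (length c - length b)" using len assms(4) by arith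
    show ?thesis unfolding lr map_map by (simp add: algebra_simps)
  qed
  finally have "take (length b) c = map (\<lambda>x. x + (length c - length b)) b"
    by (simp only: inj_map_eq_map[OF inj_on_add'])
  then obtain t where "is_perm t" "t \<noteq> []" "c = ominus b t"
    using ominus_split_aux assms by (meson down_indec_def)
  then show False using assms(1,2,5) unfolding down_indec_def by blast
qed

lemma ominus_cancel:
  assumes "down_indec b" "down_indec c" "ominus b r = ominus c r'" "b \<noteq> []" "c \<noteq> []"
  shows "b = c \<and> r = r'"
proof -
  have lb: "length b = length c" using ominus_cancel_lt assms by (metis linorder_neqE_nat)
  have "length r = length r'" using assms(3) lb by (metis length_ominus add_left_cancel)
  then have "r = r'" using assms(3) lb unfolding ominus_def by simp
  then have "map (\<lambda>x. x + length r) b = map (\<lambda>x. x + length r) c" using assms(3) unfolding ominus_def by simp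
  then have "b = c" by (simp add: inj_map_eq_map inj_on_def)
  with \<open>r = r'\<close> show ?thesis by simp
qed

lemma up_decomp_unique: "up_decomp p bs \<Longrightarrow> up_decomp p cs \<Longrightarrow> bs = cs"
proof (induction bs arbitrary: p cs)
  case Nil
  then show ?case by (cases cs) (auto simp: up_decomp_def oplus_def)
next
  case (Cons b bs)
  show ?case
  proof (cases cs)
    case Nil
    then show ?thesis using Cons.prems by (auto simp: up_decomp_def oplus_def)
  next
    case (Cons c cs')
    have h: "b \<noteq> []" "up_indec b" "c \<noteq> []" "up_indec c"
      "oplus b (foldr oplus bs []) = oplus c (foldr oplus cs' [])"
      using Cons Cons.prems by (auto simp: up_decomp_def)
    then have "b = c" "foldr oplus bs [] = foldr oplus cs' []" using oplus_cancel by blast+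
    moreover have "up_decomp (foldr oplus bs []) bs" "up_decomp (foldr oplus bs []) cs'"
      using Cons.prems Cons calculation(2) by (auto simp: up_decomp_def)
    ultimately show ?thesis using Cons.IH Cons by blast
  qed
qed

lemma down_decomp_unique: "down_decomp p bs \<Longrightarrow> down_decomp p cs \<Longrightarrow> bs = cs"
proof (induction bs arbitrary: p cs)
  case Nil
  then show ?case by (cases cs) (auto simp: down_decomp_def ominus_def)
next
  case (Cons b bs)
  show ?case
  proof (cases cs)
    case Nil
    then show ?thesis using Cons.prems by (auto simp: down_decomp_def ominus_def)
  next
    case (Cons c cs')
    have h: "b \<noteq> []" "down_indec b" "c \<noteq> []" "down_indec c"
      "ominus b (foldr ominus bs []) = ominus c (foldr ominus cs' [])"
      using Cons Cons.prems by (auto simp: down_decomp_def)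
    then have "b = c" "foldr ominus bs [] = foldr ominus cs' []" using ominus_cancel by blast+
    moreover have "down_decomp (foldr ominus bs []) bs" "down_decomp (foldr ominus bs []) cs'"
      using Cons.prems Cons calculation(2) by (auto simp: down_decomp_def)
    ultimately show ?thesis using Cons.IH Cons by blast
  qed
qed

lemma h_plus_blocks:
  assumes "is_perm p" "h_plus p < k"
  shows "\<exists>bs. up_decomp p bs \<and> (\<forall>b\<in>set bs. length b < k)"
proof -
  obtain bs where bs: "up_decomp p bs" using up_decomp_exists assms(1) by blast
  then have "(THE bs. up_decomp p bs) = bs" using up_decomp_unique by blast
  then have "Max (length ` set bs) < k" using assms(2) by (simp add: h_plus_def)
  then have "\<forall>b\<in>set bs. length b < k" by (meson List.finite_set Max_ge finite_imageI image_eqI le_less_trans)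
  with bs show ?thesis by blast
qed

lemma h_minus_blocks:
  assumes "is_perm p" "h_minus p < k"
  shows "\<exists>bs. down_decomp p bs \<and> (\<forall>b\<in>set bs. length b < k)"
proof -
  obtain bs where bs: "down_decomp p bs" using down_decomp_exists assms(1) by blast
  then have "(THE bs. down_decomp p bs) = bs" using down_decomp_unique by blast
  then have "Max (length ` set bs) < k" using assms(2) by (simp add: h_minus_def)
  then have "\<forall>b\<in>set bs. length b < k" by (meson List.finite_set Max_ge finite_imageI image_eqI le_less_trans)
  with bs show ?thesis by blast
qed


definition blocks :: "nat set \<Rightarrow> nat \<Rightarrow> nat \<Rightarrow> bool" where
  "blocks L n k \<longleftrightarrow> L \<subseteq> {0..n} \<and> 0 \<in> L \<and> n \<in> L \<and>
     (\<forall>e\<le>n. e \<notin> L \<longrightarrow> (\<exists>a\<in>L. \<exists>b\<in>L. a < e \<and> e < b \<and> b - a \<le> k - 1))"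

lemma blocks_Nil: "blocks {0} 0 k" by (simp add: blocks_def)

lemma blocks_cons:
  assumes bl: "blocks L' n' k" and m: "0 < m" "m \<le> k - 1"
  shows "blocks (insert 0 ((+) m ` L')) (m + n') k"
proof -
  let ?L = "insert 0 ((+) m ` L')"
  have L': "L' \<subseteq> {0..n'}" "0 \<in> L'" "n' \<in> L'"
    and gap: "\<And>e. e \<le> n' \<Longrightarrow> e \<notin> L' \<Longrightarrow> \<exists>a\<in>L'. \<exists>b\<in>L'. a < e \<and> e < b \<and> b - a \<le> k - 1"
    using bl unfolding blocks_def by blast+
  have "?L \<subseteq> {0..m+n'}" using L'(1) by auto
  moreover have "m + n' \<in> ?L" using L'(3) by auto
  moreover have "m \<in> ?L" using L'(2) by (metis add_0_right image_eqI insertCI)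
  moreover have "\<exists>a\<in>?L. \<exists>b\<in>?L. a < e \<and> e < b \<and> b - a \<le> k - 1" if e: "e \<le> m + n'" "e \<notin> ?L" for e
  proof (cases "e < m")
    case True
    then show ?thesis using e \<open>m \<in> ?L\<close> m by (intro bexI[of _ 0] bexI[of _ m]) auto
  next
    case False
    then have "e - m \<le> n'" "e - m \<notin> L'" using e by (auto simp: image_iff)
    then obtain a b where ab: "a \<in> L'" "b \<in> L'" "a < e - m" "e - m < b" "b - a \<le> k - 1" using gap by blast
    show ?thesis using ab False by (intro bexI[of _ "m + a"] bexI[of _ "m + b"]) auto
  qed
  ultimately show ?thesis unfolding blocks_def by auto
qed

lemma perm_image_idx:
  assumes "is_perm b"
  shows "(\<lambda>i. b!i - 1) ` {0..<length b} = {0..<length b}"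
proof -
  have "(\<lambda>i. b!i - 1) ` {0..<length b} = (\<lambda>x. x - 1) ` ((!) b ` {0..<length b})" by (simp add: image_image)
  also have "(!) b ` {0..<length b} = set b" by (auto simp: set_conv_nth)
  also have "set b = {1..length b}" using assms by (simp add: is_perm_def)
  also have "(\<lambda>x. x - 1) ` {1..length b} = {0..<length b}" by (auto simp: image_iff intro!: bexI[where x="_ + 1"])
  finally show ?thesis .
qed

lemma oplus_blocks:
  "(\<forall>b\<in>set bs. is_perm b \<and> b \<noteq> [] \<and> length b < k) \<Longrightarrow> p = foldr oplus bs [] \<Longrightarrow>
   \<exists>L. blocks L (length p) k \<and> (\<forall>l\<in>L. (\<lambda>i. p!i - 1) ` {0..<l} = {0..<l})"
proof (induction bs arbitrary: p)
  case Nil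
  then show ?case by (intro exI[of _ "{0}"]) (simp add: blocks_Nil)
next
  case (Cons b bs)
  define p' where "p' = foldr oplus bs []"
  have pp: "p = oplus b p'" using Cons.prems p'_def by simp
  obtain L' where L': "blocks L' (length p') k" "\<forall>l\<in>L'. (\<lambda>i. p'!i - 1) ` {0..<l} = {0..<l}"
    using Cons p'_def by auto
  have pb: "is_perm b" "b \<noteq> []" "length b < k" using Cons.prems by auto
  have pp': "is_perm p'" using Cons.prems p'_def foldr_oplus_perm by auto
  define m where "m = length b"
  let ?L = "insert 0 ((+) m ` L')"
  have "blocks ?L (length p) k" using blocks_cons[OF L'(1), of m] pb pp m_def by simp
  moreover have "(\<lambda>i. p!i - 1) ` {0..<l} = {0..<l}" if lL: "l \<in> ?L" for l
  proof (cases "l = 0")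
    case True then show ?thesis by simp
  next
    case False
    then obtain l' where l': "l' \<in> L'" "l = m + l'" using lL by auto
    have l'n: "l' \<le> length p'" using l' L'(1) by (auto simp: blocks_def)
    have "{0..<l} = {0..<m} \<union> (+) m ` {0..<l'}" using l' by (auto simp: image_iff intro!: bexI[where x="_ - m"])
    then have "(\<lambda>i. p!i - 1) ` {0..<l} = (\<lambda>i. p!i - 1) ` {0..<m} \<union> (\<lambda>j. p!(m+j) - 1) ` {0..<l'}"
      by (simp only: image_Un image_image)
    also have "(\<lambda>i. p!i - 1) ` {0..<m} = (\<lambda>i. b!i - 1) ` {0..<m}"
      by (rule image_cong) (auto simp: pp oplus_def m_def nth_append)
    also have "\<dots> = {0..<m}" using perm_image_idx[OF pb(1)] m_def by (simp add: add.commute)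
    also have "(\<lambda>j. p!(m+j) - 1) ` {0..<l'} = (+) m ` ((\<lambda>j. p'!j - 1) ` {0..<l'})"
    proof -
      have "p'!j \<ge> 1" if "j < length p'" for j using pp' that by (auto simp: is_perm_def)
      then show ?thesis unfolding image_image using l'n
        by (intro image_cong) (auto simp: pp oplus_def m_def nth_append)
    qed
    also have "\<dots> = {m..<m+l'}" using L'(2) l' by (simp add: add.commute)
    also have "{0..<m} \<union> {m..<m+l'} = {0..<l}" using l' by auto
    finally show ?thesis .
  qed
  ultimately show ?case by blast
qed

lemma ominus_blocks:
  "(\<forall>b\<in>set bs. is_perm b \<and> b \<noteq> [] \<and> length b < k) \<Longrightarrow> p = foldr ominus bs [] \<Longrightarrow>
   \<exists>L. blocks L (length p) k \<and> (\<forall>l\<in>L. (\<lambda>i. p!i - 1) ` {0..<l} = {length p - l..<length p})"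
proof (induction bs arbitrary: p)
  case Nil
  then show ?case by (intro exI[of _ "{0}"]) (simp add: blocks_Nil)
next
  case (Cons b bs)
  define p' where "p' = foldr ominus bs []"
  have pp: "p = ominus b p'" using Cons.prems p'_def by simp
  obtain L' where L': "blocks L' (length p') k" "\<forall>l\<in>L'. (\<lambda>i. p'!i - 1) ` {0..<l} = {length p' - l..<length p'}"
    using Cons p'_def by auto
  have pb: "is_perm b" "b \<noteq> []" "length b < k" using Cons.prems by auto
  have pp': "is_perm p'" using Cons.prems p'_def foldr_ominus_perm by auto
  define m where "m = length b"
  define n' where "n' = length p'"
  have lp: "length p = m + n'" using pp m_def n'_def by simp
  let ?L = "insert 0 ((+) m ` L')"
  have "blocks ?L (length p) k" using blocks_cons[OF L'(1), of m] pb pp m_def by simp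
  moreover have "(\<lambda>i. p!i - 1) ` {0..<l} = {length p - l..<length p}" if lL: "l \<in> ?L" for l
  proof (cases "l = 0")
    case True then show ?thesis by simp
  next
    case False
    then obtain l' where l': "l' \<in> L'" "l = m + l'" using lL by auto
    have l'n: "l' \<le> n'" using l' L'(1) by (auto simp: blocks_def n'_def)
    have "{0..<l} = {0..<m} \<union> (+) m ` {0..<l'}" using l' by (auto simp: image_iff intro!: bexI[where x="_ - m"])
    then have "(\<lambda>i. p!i - 1) ` {0..<l} = (\<lambda>i. p!i - 1) ` {0..<m} \<union> (\<lambda>j. p!(m+j) - 1) ` {0..<l'}"
      by (simp only: image_Un image_image)
    also have "(\<lambda>i. p!i - 1) ` {0..<m} = (+) n' ` ((\<lambda>i. b!i - 1) ` {0..<m})"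
    proof -
      have "b!i \<ge> 1" if "i < length b" for i using pb that by (auto simp: is_perm_def)
      then show ?thesis unfolding image_image
        by (intro image_cong) (auto simp: pp ominus_def m_def n'_def nth_append)
    qed
    also have "\<dots> = {n'..<n'+m}" using perm_image_idx[OF pb(1)] m_def by (simp add: add.commute)
    also have "(\<lambda>j. p!(m+j) - 1) ` {0..<l'} = (\<lambda>j. p'!j - 1) ` {0..<l'}"
      by (rule image_cong) (auto simp: pp ominus_def m_def nth_append)
    also have "\<dots> = {n' - l'..<n'}" using L'(2) l' n'_def by simp
    also have "{n'..<n'+m} \<union> {n' - l'..<n'} = {length p - l..<length p}" using l' lp l'n by auto
    finally show ?thesis .
  qed
  ultimately show ?case by blast
qed


lemma sw_less_iff:
  fixes xs :: "nat list"
  assumes "sorted_wrt (<) xs" "i < length xs" "j < length xs"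
  shows "xs!i < xs!j \<longleftrightarrow> i < j"
proof (cases i j rule: linorder_cases)
  case less then show ?thesis using sorted_wrt_nth_less[OF assms(1)] assms by auto
next
  case equal then show ?thesis by auto
next
  case greater then show ?thesis using sorted_wrt_nth_less[OF assms(1), of j i] assms by auto
qed

lemma sw_le_iff:
  fixes xs :: "nat list"
  assumes "sorted_wrt (<) xs" "i < length xs" "j < length xs"
  shows "xs!i \<le> xs!j \<longleftrightarrow> i \<le> j"
  using sw_less_iff[OF assms(1,3,2)] by (metis not_less)

lemma sw_eq_iff:
  fixes xs :: "nat list"
  assumes "sorted_wrt (<) xs" "i < length xs" "j < length xs"
  shows "xs!i = xs!j \<longleftrightarrow> i = j"
  using assms sw_le_iff by (metis order.antisym order_refl)

lemma interval_idx:
  fixes xs :: "nat list"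
  assumes sx: "sorted_wrt (<) xs" and J: "is_interval (set xs) J"
  shows "\<exists>i j. i < j \<and> j \<le> length xs \<and> J = (!) xs ` {i..<j}"
proof -
  obtain a b where ab: "a \<in> set xs" "b \<in> set xs" "a \<le> b" "J = set xs \<inter> {a..b}"
    using J unfolding is_interval_def by blast
  obtain i j0 where ij: "i < length xs" "j0 < length xs" "a = xs!i" "b = xs!j0"
    using ab by (metis in_set_conv_nth)
  have "i \<le> j0" using sw_le_iff[OF sx ij(1,2)] ij ab by simp
  have "J = (!) xs ` {i..<Suc j0}"
  proof
    show "J \<subseteq> (!) xs ` {i..<Suc j0}"
    proof
      fix x assume "x \<in> J"
      then obtain m where m: "m < length xs" "x = xs!m" "xs!i \<le> xs!m" "xs!m \<le> xs!j0"
        using ab ij by (auto simp: in_set_conv_nth)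
      then have "i \<le> m" "m \<le> j0" using sw_le_iff[OF sx] ij by auto
      then show "x \<in> (!) xs ` {i..<Suc j0}" using m by auto
    qed
  next
    show "(!) xs ` {i..<Suc j0} \<subseteq> J"
    proof
      fix x assume "x \<in> (!) xs ` {i..<Suc j0}"
      then obtain m where m: "i \<le> m" "m \<le> j0" "x = xs!m" by auto
      then have "m < length xs" using ij by auto
      then show "x \<in> J" using m ab ij sw_le_iff[OF sx] by auto
    qed
  qed
  then show ?thesis using \<open>i \<le> j0\<close> ij by (intro exI[of _ i] exI[of _ "Suc j0"]) auto
qed

lemma idx_interval:
  fixes xs :: "nat list"
  assumes sx: "sorted_wrt (<) xs" and ij: "i < j" "j \<le> length xs"
  shows "is_interval (set xs) ((!) xs ` {i..<j})"
proof -
  have "(!) xs ` {i..<j} = set xs \<inter> {xs!i..xs!(j-1)}"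
  proof
    show "(!) xs ` {i..<j} \<subseteq> set xs \<inter> {xs!i..xs!(j-1)}"
      using ij sw_le_iff[OF sx] by auto
  next
    show "set xs \<inter> {xs!i..xs!(j-1)} \<subseteq> (!) xs ` {i..<j}"
    proof
      fix x assume "x \<in> set xs \<inter> {xs!i..xs!(j-1)}"
      then obtain m where m: "m < length xs" "x = xs!m" "xs!i \<le> xs!m" "xs!m \<le> xs!(j-1)"
        by (auto simp: in_set_conv_nth)
      then have "i \<le> m" "m \<le> j - 1" using sw_le_iff[OF sx] ij by auto
      then show "x \<in> (!) xs ` {i..<j}" using m ij by auto
    qed
  qed
  moreover have "xs!i \<in> set xs" "xs!(j-1) \<in> set xs" "xs!i \<le> xs!(j-1)"
    using ij sw_le_iff[OF sx] by auto
  ultimately show ?thesis unfolding is_interval_def by blast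
qed

lemma idx_mem:
  fixes xs :: "nat list"
  assumes sx: "sorted_wrt (<) xs" and c: "c < length xs" and j: "j \<le> length xs"
  shows "xs!c \<in> (!) xs ` {i..<j} \<longleftrightarrow> i \<le> c \<and> c < j"
proof
  assume "xs!c \<in> (!) xs ` {i..<j}"
  then obtain m where "i \<le> m" "m < j" "xs!c = xs!m" by auto
  then show "i \<le> c \<and> c < j" using sw_eq_iff[OF sx c, of m] j by auto
qed auto

lemma idx_end_unique:
  fixes xs :: "nat list"
  assumes sx: "sorted_wrt (<) xs" and "i < j" "j \<le> length xs" "i' < j'" "j' \<le> length xs"
    and eq: "(!) xs ` {i..<j} = (!) xs ` {i'..<j'}"
  shows "j = j'"
proof -
  have "j - 1 \<in> {i..<j}" using assms by auto
  then have "xs!(j-1) \<in> (!) xs ` {i'..<j'}" using eq by blast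
  then have "j - 1 < j'" using idx_mem[OF sx, of "j-1" j' i'] assms(2-5) by auto
  moreover have "j' - 1 \<in> {i'..<j'}" using assms by auto
  then have "xs!(j'-1) \<in> (!) xs ` {i..<j}" using eq by blast
  then have "j' - 1 < j" using idx_mem[OF sx, of "j'-1" j i] assms(2-5) by auto
  ultimately show ?thesis by linarith
qed

definition nxt :: "nat set \<Rightarrow> nat \<Rightarrow> nat" where
  "nxt S c = (LEAST c'. c' \<in> S \<and> c < c')"

lemma nxt:
  assumes "x \<in> S" "c < x"
  shows "nxt S c \<in> S" "c < nxt S c" "\<And>y. y \<in> S \<Longrightarrow> c < y \<Longrightarrow> nxt S c \<le> y"
proof -
  have "nxt S c \<in> S \<and> c < nxt S c" unfolding nxt_def by (rule LeastI[of _ x]) (use assms in auto)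
  then show "nxt S c \<in> S" "c < nxt S c" by auto
  show "\<And>y. y \<in> S \<Longrightarrow> c < y \<Longrightarrow> nxt S c \<le> y" unfolding nxt_def by (rule Least_le) auto
qed


lemma G:
  fixes X :: "nat set" and xs :: "nat list" and P :: "nat set \<Rightarrow> bool"
  assumes sx: "sorted_wrt (<) xs" and X: "set xs = X" and n: "length xs = n" "n \<ge> 1" and k: "k \<ge> 1"
    and bl: "blocks L n k"
    and Ps: "\<forall>i<n. P {xs!i}" and Pb: "\<forall>a\<in>L. \<forall>b\<in>L. a < b \<longrightarrow> P ((!) xs ` {a..<b})"
    and Js: "interval_partition X Js"
  shows "\<exists>Is. interval_partition X Is \<and> refines Is Js \<and>
           int (length Is) \<le> int (length Js) + (int k - 1) * (int (length Js) - 1) \<and> (\<forall>I\<in>set Is. P I)"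
proof -
  have Jint: "\<forall>J\<in>set Js. is_interval X J" and Jun: "\<Union>(set Js) = X"
    using Js unfolding interval_partition_def by auto
  have Jform: "\<exists>i j. i < j \<and> j \<le> n \<and> J = (!) xs ` {i..<j}" if "J \<in> set Js" for J
    using interval_idx[OF sx] Jint that X n by blast
  define E where "E = {j. \<exists>J\<in>set Js. \<exists>i. i < j \<and> j \<le> n \<and> J = (!) xs ` {i..<j}}"
  define C where "C = insert 0 E"
  have CJ: "\<exists>i j. i < j \<and> j \<le> n \<and> j \<in> C \<and> J = (!) xs ` {i..<j}" if "J \<in> set Js" for J
    using Jform[OF that] that unfolding C_def E_def by blast
  have Csub: "C \<subseteq> {0..n}" unfolding C_def E_def by auto
  have finC: "finite C" using Csub finite_subset by blast
  have C0: "0 \<in> C" unfolding C_def by simp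
  have Cn: "n \<in> C"
  proof -
    have "xs!(n-1) \<in> X" using X n by auto
    then obtain J where J: "J \<in> set Js" "xs!(n-1) \<in> J" using Jun by blast
    then obtain i j where ij: "i < j" "j \<le> n" "j \<in> C" "J = (!) xs ` {i..<j}" using CJ by blast
    then have "n - 1 < j" using idx_mem[OF sx, of "n-1" j i] J n by auto
    then have "j = n" using ij(2) by linarith
    then show ?thesis using ij by simp
  qed
  define endf where "endf J = (SOME j. \<exists>i. i < j \<and> j \<le> n \<and> J = (!) xs ` {i..<j})" for J
  have "E \<subseteq> endf ` set Js"
  proof
    fix j assume "j \<in> E"
    then obtain J i where J: "J \<in> set Js" "i < j" "j \<le> n" "J = (!) xs ` {i..<j}" unfolding E_def by blast
    then have "\<exists>j i. i < j \<and> j \<le> n \<and> J = (!) xs ` {i..<j}" by blast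
    then have "\<exists>i. i < endf J \<and> endf J \<le> n \<and> J = (!) xs ` {i..<endf J}" unfolding endf_def by (rule someI_ex)
    then obtain i' where i': "i' < endf J" "endf J \<le> n" "J = (!) xs ` {i'..<endf J}" by blast
    have eqJ: "(!) xs ` {i..<j} = (!) xs ` {i'..<endf J}" using J(4) i'(3) by simp
    have "j \<le> length xs" "endf J \<le> length xs" using J(3) i'(2) n by auto
    then have "j = endf J" using idx_end_unique[OF sx J(2) _ i'(1) _ eqJ] by blast
    then show "j \<in> endf ` set Js" using J by blast
  qed
  then have "card E \<le> card (endf ` set Js)" by (intro card_mono) auto
  also have "\<dots> \<le> card (set Js)" by (rule card_image_le) simp
  also have "\<dots> \<le> length Js" by (rule card_length)
  finally have cE: "card E \<le> length Js" .
  have finE: "finite E" using finC unfolding C_def by simp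
  have "card C \<le> card E + 1" unfolding C_def using finE by (simp add: card_insert_if)
  then have cardC: "card C \<le> length Js + 1" using cE by linarith
  have gap: "\<forall>e\<le>n. e \<notin> L \<longrightarrow> (\<exists>a\<in>L. \<exists>b\<in>L. a < e \<and> e < b \<and> b - a \<le> k - 1)"
    using bl unfolding blocks_def by blast
  have "\<forall>e\<in>C-L. \<exists>ab. fst ab \<in> L \<and> snd ab \<in> L \<and> fst ab < e \<and> e < snd ab \<and> snd ab - fst ab \<le> k - 1"
  proof
    fix e assume e: "e \<in> C - L"
    then have en: "e \<le> n" "e \<notin> L" using Csub by auto
    obtain a b where "a \<in> L" "b \<in> L" "a < e" "e < b" "b - a \<le> k - 1" using gap[rule_format, OF en] by blast
    then show "\<exists>ab. fst ab \<in> L \<and> snd ab \<in> L \<and> fst ab < e \<and> e < snd ab \<and> snd ab - fst ab \<le> k - 1"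
      by (intro exI[of _ "(a,b)"]) simp
  qed
  then have "\<exists>AB. \<forall>e\<in>C-L. fst (AB e) \<in> L \<and> snd (AB e) \<in> L \<and> fst (AB e) < e \<and> e < snd (AB e) \<and> snd (AB e) - fst (AB e) \<le> k - 1"
    by (rule bchoice)
  then obtain AB where AB0: "\<forall>e\<in>C-L. fst (AB e) \<in> L \<and> snd (AB e) \<in> L \<and> fst (AB e) < e \<and> e < snd (AB e) \<and> snd (AB e) - fst (AB e) \<le> k - 1"
    by (elim exE)
  define A where "A e = fst (AB e)" for e
  define B where "B e = snd (AB e)" for e
  have AB: "\<And>e. e \<in> C - L \<Longrightarrow> A e \<in> L \<and> B e \<in> L \<and> A e < e \<and> e < B e \<and> B e - A e \<le> k - 1"
    using AB0 unfolding A_def B_def by simp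
  have Lsub: "L \<subseteq> {0..n}" and L0: "0 \<in> L" and Ln: "n \<in> L" using bl unfolding blocks_def by auto
  define C' where "C' = C \<union> (\<Union>e\<in>C-L. {A e..B e})"
  have ABsub: "{A e..B e} \<subseteq> {0..n}" if "e \<in> C - L" for e using AB[OF that] Lsub by auto
  have C'sub: "C' \<subseteq> {0..n}" unfolding C'_def by (intro Un_least UN_least Csub ABsub)
  have finC': "finite C'" using C'sub finite_subset by blast
  have CC': "C \<subseteq> C'" unfolding C'_def by auto
  have C'I: "x \<in> C'" if "e \<in> C - L" "x \<in> {A e..B e}" for e x using that unfolding C'_def by blast
  have C'0: "0 \<in> C'" and C'n: "n \<in> C'" using C0 Cn CC' by auto
  have cardC': "card C' \<le> card C + card (C - L) * (k - 1)"
  proof -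
    have eq: "C' = C \<union> (\<Union>e\<in>C-L. {A e..B e} - {e})" unfolding C'_def by blast
    have "card C' \<le> card C + card (\<Union>e\<in>C-L. {A e..B e} - {e})" unfolding eq by (rule card_Un_le)
    also have "card (\<Union>e\<in>C-L. {A e..B e} - {e}) \<le> (\<Sum>e\<in>C-L. card ({A e..B e} - {e}))"
      by (rule card_UN_le) (use finC in auto)
    also have "\<dots> \<le> (\<Sum>e\<in>C-L. k - 1)"
    proof (rule sum_mono)
      fix e assume e: "e \<in> C - L"
      then have "card ({A e..B e} - {e}) = B e - A e" using AB[OF e] by simp
      then show "card ({A e..B e} - {e}) \<le> k - 1" using AB[OF e] by simp
    qed
    also have "\<dots> = card (C - L) * (k - 1)" by simp
    finally show ?thesis by simp
  qed
  have cardCL: "card (C - L) + 2 \<le> card C"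
  proof -
    have "{0, n} \<subseteq> C \<inter> L" using C0 Cn L0 Ln by auto
    then have "card {0, n} \<le> card (C \<inter> L)" by (intro card_mono) (use finC in auto)
    then have "2 \<le> card (C \<inter> L)" using n by simp
    moreover have "card (C - L) = card C - card (C \<inter> L)" by (rule card_Diff_subset_Int) (use finC in auto)
    moreover have "card (C \<inter> L) \<le> card C" by (rule card_mono) (use finC in auto)
    ultimately show ?thesis by linarith
  qed
  have key: "nxt C' c = c + 1 \<or> (c \<in> L \<and> nxt C' c \<in> L)" if c: "c \<in> C'" "c < n" for c
  proof -
    have nx: "nxt C' c \<in> C'" "c < nxt C' c" "\<And>y. y \<in> C' \<Longrightarrow> c < y \<Longrightarrow> nxt C' c \<le> y"
      using nxt[OF C'n c(2)] by auto
    show ?thesis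
    proof (rule ccontr)
      assume neg: "\<not> ?thesis"
      then have gt: "c + 1 < nxt C' c" using nx(2) by auto
      have no: "y \<notin> C'" if "c < y" "y < nxt C' c" for y using nx(3) that by fastforce
      have "c \<in> L"
      proof (rule ccontr)
        assume cL: "c \<notin> L"
        show False
        proof (cases "c \<in> C")
          case True
          then have "c + 1 \<in> {A c..B c}" using AB[of c] cL True by auto
          then have "c + 1 \<in> C'" using C'I[of c] True cL by blast
          then show False using no[of "c+1"] gt by simp
        next
          case False
          then obtain e where e: "e \<in> C - L" "c \<in> {A e..B e}" using c(1) unfolding C'_def by blast
          have "c \<noteq> B e" using cL AB[OF e(1)] by auto
          then have "c + 1 \<in> {A e..B e}" using e by auto
          then have "c + 1 \<in> C'" using C'I[OF e(1)] by blast
          then show False using no[of "c+1"] gt by simp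
        qed
      qed
      moreover have "nxt C' c \<in> L"
      proof (rule ccontr)
        let ?d = "nxt C' c"
        assume dL: "?d \<notin> L"
        show False
        proof (cases "?d \<in> C")
          case True
          then have "?d - 1 \<in> {A ?d..B ?d}" using AB[of ?d] dL True by auto
          then have "?d - 1 \<in> C'" using C'I[of ?d] True dL by blast
          moreover have "c < ?d - 1" "?d - 1 < ?d" using gt by auto
          ultimately show False using no by blast
        next
          case False
          then obtain e where e: "e \<in> C - L" "?d \<in> {A e..B e}" using nx(1) unfolding C'_def by blast
          have "?d \<noteq> A e" using dL AB[OF e(1)] by auto
          then have "?d - 1 \<in> {A e..B e}" using e by auto
          then have "?d - 1 \<in> C'" using C'I[OF e(1)] by blast
          moreover have "c < ?d - 1" "?d - 1 < ?d" using gt by auto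
          ultimately show False using no by blast
        qed
      qed
      ultimately show False using neg by auto
    qed
  qed
  define S where "S = sorted_list_of_set (C' - {n})"
  have setS: "set S = C' - {n}" unfolding S_def using finC' by simp
  have swS: "sorted_wrt (<) S" unfolding S_def by simp
  have lenS: "length S = card C' - 1" unfolding S_def using finC' C'n by simp
  have cS: "c < n" "nxt C' c \<in> C'" "c < nxt C' c" "nxt C' c \<le> n" "\<And>y. y \<in> C' \<Longrightarrow> c < y \<Longrightarrow> nxt C' c \<le> y"
    if "c \<in> set S" for c
  proof -
    show c: "c < n" using that setS C'sub by fastforce
    show "nxt C' c \<in> C'" "c < nxt C' c" "\<And>y. y \<in> C' \<Longrightarrow> c < y \<Longrightarrow> nxt C' c \<le> y"
      using nxt[OF C'n c] by auto
    then show "nxt C' c \<le> n" using C'n c by auto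
  qed
  define F where "F c = (!) xs ` {c..<nxt C' c}" for c
  define Is where "Is = map F S"
  have PI: "\<forall>I\<in>set Is. P I"
  proof
    fix I assume "I \<in> set Is"
    then obtain c where c: "c \<in> set S" "I = F c" unfolding Is_def by auto
    have "c \<in> C'" using c setS by auto
    from key[OF this cS(1)[OF c(1)]] show "P I"
    proof
      assume "nxt C' c = c + 1"
      then have "I = {xs!c}" using c unfolding F_def by simp
      then show "P I" using Ps cS(1)[OF c(1)] by simp
    next
      assume "c \<in> L \<and> nxt C' c \<in> L"
      then show "P I" using Pb cS(3)[OF c(1)] c unfolding F_def by blast
    qed
  qed
  have ref: "refines Is Js" unfolding refines_def
  proof
    fix I assume "I \<in> set Is"
    then obtain c where c: "c \<in> set S" "I = F c" unfolding Is_def by auto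
    have "xs!c \<in> X" using cS(1)[OF c(1)] X n by auto
    then obtain J where J: "J \<in> set Js" "xs!c \<in> J" using Jun by blast
    then obtain i j where ij: "i < j" "j \<le> n" "j \<in> C" "J = (!) xs ` {i..<j}" using CJ by blast
    then have "i \<le> c" "c < j" using idx_mem[OF sx, of c j i] J cS(1)[OF c(1)] n by auto
    then have "nxt C' c \<le> j" using cS(5)[OF c(1)] ij CC' by auto
    then have "I \<subseteq> J" using c ij \<open>i \<le> c\<close> unfolding F_def by auto
    then show "\<exists>J\<in>set Js. I \<subseteq> J" using J by blast
  qed
  have ipart: "interval_partition X Is" unfolding interval_partition_def
  proof (intro conjI)
    show "\<forall>I\<in>set Is. is_interval X I"
    proof
      fix I assume "I \<in> set Is"
      then obtain c where c: "c \<in> set S" "I = F c" unfolding Is_def by auto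
      show "is_interval X I" unfolding c F_def X[symmetric]
        by (rule idx_interval[OF sx]) (use cS[OF c(1)] n in auto)
    qed
  next
    show "sorted_wrt set_less Is" unfolding Is_def sorted_wrt_map
    proof (rule sorted_wrt_mono_rel[OF _ swS])
      fix c1 c2 assume c: "c1 \<in> set S" "c2 \<in> set S" "c1 < c2"
      have "nxt C' c1 \<le> c2" using cS(5)[OF c(1)] c setS by auto
      show "set_less (F c1) (F c2)" unfolding set_less_def F_def
      proof (intro ballI)
        fix x y assume "x \<in> (!) xs ` {c1..<nxt C' c1}" "y \<in> (!) xs ` {c2..<nxt C' c2}"
        then obtain u v where uv: "x = xs!u" "y = xs!v" "u < nxt C' c1" "c2 \<le> v" "v < nxt C' c2" by auto
        then have "u < v" "v < length xs" using \<open>nxt C' c1 \<le> c2\<close> cS(4)[OF c(2)] n by auto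
        then show "x < y" using uv sorted_wrt_nth_less[OF sx] by auto
      qed
    qed
  next
    show "\<Union>(set Is) = X"
    proof
      show "\<Union>(set Is) \<subseteq> X"
      proof
        fix x assume "x \<in> \<Union>(set Is)"
        then obtain c where c: "c \<in> set S" "x \<in> F c" unfolding Is_def by auto
        then obtain u where "u < nxt C' c" "x = xs!u" unfolding F_def by auto
        then show "x \<in> X" using cS(4)[OF c(1)] X n by auto
      qed
    next
      show "X \<subseteq> \<Union>(set Is)"
      proof
        fix x assume "x \<in> X"
        then obtain u where u: "u < n" "x = xs!u" using X n by (auto simp: in_set_conv_nth)
        define c where "c = Max {c\<in>C'. c \<le> u}"
        have fin: "finite {c\<in>C'. c \<le> u}" using finC' by auto
        have "c \<in> {c\<in>C'. c \<le> u}" unfolding c_def by (rule Max_in[OF fin]) (use C'0 in auto)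
        then have cm: "c \<in> C'" "c \<le> u" by auto
        then have cS': "c \<in> set S" using setS u by auto
        have "u < nxt C' c"
        proof (rule ccontr)
          assume "\<not> u < nxt C' c"
          then have "nxt C' c \<le> c" using Max_ge[OF fin, of "nxt C' c"] cS(2)[OF cS'] unfolding c_def by auto
          then show False using cS(3)[OF cS'] by auto
        qed
        then have "x \<in> F c" unfolding F_def using u cm by auto
        then show "x \<in> \<Union>(set Is)" unfolding Is_def using cS' by auto
      qed
    qed
  qed
  have len: "length Is = card C' - 1" unfolding Is_def using lenS by simp
  have bound: "int (length Is) \<le> int (length Js) + (int k - 1) * (int (length Js) - 1)"
  proof -
    define r where "r = length Js"
    have a: "int (card C') \<le> int (card C) + int (card (C - L)) * int (k - 1)"
      using cardC' by (metis of_nat_add of_nat_le_iff of_nat_mult)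
    have b: "int (k - 1) = int k - 1" using k by simp
    have d: "int (card (C - L)) * (int k - 1) \<le> (int (card C) - 2) * (int k - 1)"
      using cardCL k by (intro mult_right_mono) auto
    have c1: "int (card C') \<le> int (card C) + (int (card C) - 2) * (int k - 1)"
      using a b d by simp
    have c2: "(int (card C) - 2) * (int k - 1) \<le> (int r - 1) * (int k - 1)"
      using cardC k r_def by (intro mult_right_mono) auto
    have "1 \<le> card C'" using C'n finC' by (metis card_0_eq empty_iff less_one not_less)
    then show ?thesis using c1 c2 cardC len r_def by (simp add: algebra_simps of_nat_diff)
  qed
  show ?thesis using ipart ref bound PI by blast
qed


lemma blocks_flip:
  assumes "blocks L n k" shows "blocks ((\<lambda>l. n - l) ` L) n k"
proof -
  have L: "L \<subseteq> {0..n}" "0 \<in> L" "n \<in> L"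
    and gap: "\<forall>e\<le>n. e \<notin> L \<longrightarrow> (\<exists>a\<in>L. \<exists>b\<in>L. a < e \<and> e < b \<and> b - a \<le> k - 1)"
    using assms unfolding blocks_def by blast+
  let ?L = "(\<lambda>l. n - l) ` L"
  have "?L \<subseteq> {0..n}" by auto
  moreover have "0 \<in> ?L" using L(3) by (metis diff_self_eq_0 image_eqI)
  moreover have "n \<in> ?L" using L(2) by (metis diff_zero image_eqI)
  moreover have "\<exists>a\<in>?L. \<exists>b\<in>?L. a < e \<and> e < b \<and> b - a \<le> k - 1" if e: "e \<le> n" "e \<notin> ?L" for e
  proof -
    have "n - e \<notin> L" using e by (metis diff_diff_cancel image_eqI)
    then obtain a b where ab: "a \<in> L" "b \<in> L" "a < n - e" "n - e < b" "b - a \<le> k - 1"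
      using gap e by (meson diff_le_self)
    have "b \<le> n" using ab L(1) by auto
    then show ?thesis using ab e by (intro bexI[of _ "n - b"] bexI[of _ "n - a"]) auto
  qed
  ultimately show ?thesis unfolding blocks_def by blast
qed

lemma side:
  fixes X Y :: "nat set" and xs ys :: "nat list" and g \<psi> :: "nat \<Rightarrow> nat"
  assumes sx: "sorted_wrt (<) xs" and sy: "sorted_wrt (<) ys" and X: "set xs = X" and Y: "set ys = Y"
    and n: "length xs = n" "length ys = n" "n \<ge> 1" and k: "k \<ge> 1" and bl: "blocks L n k"
    and g: "\<forall>i<n. g (xs!i) = ys!(\<psi> i)" and \<psi>: "\<forall>i<n. \<psi> i < n"
    and iv: "\<forall>a\<in>L. \<forall>b\<in>L. a < b \<longrightarrow> (\<exists>c d. c < d \<and> d \<le> n \<and> \<psi> ` {a..<b} = {c..<d})"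
  shows "\<forall>Js. interval_partition X Js \<longrightarrow>
            (\<exists>Is. interval_partition X Is \<and> refines Is Js \<and>
               int (length Is) \<le> int (length Js) + (int k - 1) * (int (length Js) - 1) \<and>
               (\<forall>I\<in>set Is. is_interval Y (g ` I)))"
proof (intro allI impI)
  fix Js assume Js: "interval_partition X Js"
  show "\<exists>Is. interval_partition X Is \<and> refines Is Js \<and>
               int (length Is) \<le> int (length Js) + (int k - 1) * (int (length Js) - 1) \<and>
               (\<forall>I\<in>set Is. is_interval Y (g ` I))"
  proof (rule G[OF sx X n(1) n(3) k bl _ _ Js])
    show "\<forall>i<n. is_interval Y (g ` {xs!i})"
    proof (intro allI impI)
      fix i assume i: "i < n"
      have "g ` {xs!i} = (!) ys ` {\<psi> i..<\<psi> i + 1}" using g i by simp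
      have "\<psi> i + 1 \<le> length ys" using \<psi> i n by (simp add: Suc_le_eq)
      then show "is_interval Y (g ` {xs!i})" using idx_interval[OF sy, of "\<psi> i" "\<psi> i + 1"] \<open>g ` {xs!i} = _\<close> Y by simp
    qed
  next
    show "\<forall>a\<in>L. \<forall>b\<in>L. a < b \<longrightarrow> is_interval Y (g ` (!) xs ` {a..<b})"
    proof (intro ballI impI)
      fix a b assume ab: "a \<in> L" "b \<in> L" "a < b"
      then obtain c d where cd: "c < d" "d \<le> n" "\<psi> ` {a..<b} = {c..<d}" using iv by blast
      have "b \<le> n" using ab bl unfolding blocks_def by auto
      then have "g ` (!) xs ` {a..<b} = (!) ys ` (\<psi> ` {a..<b})" using g by (force simp: image_image)
      then have "g ` (!) xs ` {a..<b} = (!) ys ` {c..<d}" using cd by simp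
      then show "is_interval Y (g ` (!) xs ` {a..<b})" using idx_interval[OF sy cd(1)] cd n Y by simp
    qed
  qed
qed

lemma img_interval_plus:
  fixes \<phi> :: "nat \<Rightarrow> nat"
  assumes inj: "inj_on \<phi> {0..<n}" and L: "L \<subseteq> {0..n}" and pre: "\<forall>l\<in>L. \<phi> ` {0..<l} = {0..<l}"
  shows "\<forall>a\<in>L. \<forall>b\<in>L. a < b \<longrightarrow> \<phi> ` {a..<b} = {a..<b}"
proof (intro ballI impI)
  fix a b assume ab: "a \<in> L" "b \<in> L" "a < b"
  have bn: "b \<le> n" using ab L by auto
  have "{a..<b} = {0..<b} - {0..<a}" by auto
  then have "\<phi> ` {a..<b} = \<phi> ` {0..<b} - \<phi> ` {0..<a}"
    using inj_on_image_set_diff[OF inj, of "{0..<b}" "{0..<a}"] bn ab by auto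
  also have "\<dots> = {a..<b}" using pre ab by auto
  finally show "\<phi> ` {a..<b} = {a..<b}" .
qed

lemma img_interval_minus:
  fixes \<phi> :: "nat \<Rightarrow> nat"
  assumes inj: "inj_on \<phi> {0..<n}" and L: "L \<subseteq> {0..n}" and pre: "\<forall>l\<in>L. \<phi> ` {0..<l} = {n - l..<n}"
  shows "\<forall>a\<in>L. \<forall>b\<in>L. a < b \<longrightarrow> \<phi> ` {a..<b} = {n - b..<n - a}"
proof (intro ballI impI)
  fix a b assume ab: "a \<in> L" "b \<in> L" "a < b"
  have bn: "b \<le> n" using ab L by auto
  have "{a..<b} = {0..<b} - {0..<a}" by auto
  then have "\<phi> ` {a..<b} = \<phi> ` {0..<b} - \<phi> ` {0..<a}"
    using inj_on_image_set_diff[OF inj, of "{0..<b}" "{0..<a}"] bn ab by auto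
  also have "\<dots> = {n - b..<n} - {n - a..<n}" using pre ab by auto
  also have "\<dots> = {n - b..<n - a}" using bn ab by auto
  finally show "\<phi> ` {a..<b} = {n - b..<n - a}" .
qed


theorem mainTheorem4:
  fixes X Y :: "nat set" and f :: "nat \<Rightarrow> nat" and p :: "nat list" and n k :: nat
  assumes "finite X" and "finite Y" and "card X = n" and "card Y = n" and "n \<ge> 1"
    and "bij_betw f X Y"
    and "order_iso_perm X Y f p"
    and "p \<in> H_plus k \<union> H_minus k"
  shows "(\<forall>Js. interval_partition X Js \<longrightarrow>
            (\<exists>Is. interval_partition X Is \<and> refines Is Js \<and>
               int (length Is) \<le> int (length Js) + (int k - 1) * (int (length Js) - 1) \<and>
               (\<forall>I\<in>set Is. is_interval Y (f ` I))))
       \<and> (\<forall>Js. interval_partition Y Js \<longrightarrow>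
            (\<exists>Is. interval_partition Y Is \<and> refines Is Js \<and>
               int (length Is) \<le> int (length Js) + (int k - 1) * (int (length Js) - 1) \<and>
               (\<forall>I\<in>set Is. is_interval X (inv_into X f ` I))))"
proof -
  define xs where "xs = sorted_list_of_set X"
  define ys where "ys = sorted_list_of_set Y"
  have sx: "sorted_wrt (<) xs" and sy: "sorted_wrt (<) ys" by (simp_all add: xs_def ys_def)
  have X: "set xs = X" and Y: "set ys = Y" using assms(1,2) by (simp_all add: xs_def ys_def)
  have lx: "length xs = n" and ly: "length ys = n" using assms(3,4) by (simp_all add: xs_def ys_def)
  have isp: "is_perm p" and lp: "length p = n" and fp: "\<forall>i<n. ys!(p!i - 1) = f (xs!i)"
    using assms(7) assms(3) unfolding order_iso_perm_def xs_def ys_def by auto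
  define \<phi> where "\<phi> i = p!i - 1" for i
  have p1: "1 \<le> p!i" "p!i \<le> n" if "i < n" for i
    using isp lp that nth_mem[of i p] unfolding is_perm_def by auto
  have inj\<phi>: "inj_on \<phi> {0..<n}"
  proof (rule inj_onI)
    fix i j assume ij: "i \<in> {0..<n}" "j \<in> {0..<n}" "\<phi> i = \<phi> j"
    then have "p!i = p!j" using p1[of i] p1[of j] unfolding \<phi>_def by auto
    then show "i = j" using isp lp ij unfolding is_perm_def by (simp add: nth_eq_iff_index_eq)
  qed
  have \<phi>r: "\<forall>i<n. \<phi> i < n" using p1 unfolding \<phi>_def by (metis diff_less le_trans less_le_trans zero_less_one order_less_le_trans less_one not_less diff_le_self)
  have im\<phi>: "\<phi> ` {0..<n} = {0..<n}" using perm_image_idx[OF isp] lp unfolding \<phi>_def by simp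
  have fg: "\<forall>i<n. f (xs!i) = ys!(\<phi> i)" using fp unfolding \<phi>_def by simp
  have injf: "inj_on f X" using assms(6) by (rule bij_betw_imp_inj_on)
  have "k \<ge> 1 \<and> (\<exists>L. blocks L n k \<and> ((\<forall>a\<in>L. \<forall>b\<in>L. a < b \<longrightarrow> \<phi> ` {a..<b} = {a..<b}) \<or>
          (\<forall>a\<in>L. \<forall>b\<in>L. a < b \<longrightarrow> \<phi> ` {a..<b} = {n - b..<n - a})))"
  proof (cases "p \<in> H_plus k")
    case True
    then have hp: "h_plus p < k" by (simp add: H_plus_def)
    obtain bs where bs: "up_decomp p bs" "\<forall>b\<in>set bs. length b < k" using h_plus_blocks[OF isp hp] by blast
    have "\<forall>b\<in>set bs. is_perm b \<and> b \<noteq> [] \<and> length b < k" "p = foldr oplus bs []"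
      using bs unfolding up_decomp_def up_indec_def by auto
    from oplus_blocks[OF this] obtain L where L: "blocks L n k" "\<forall>l\<in>L. \<phi> ` {0..<l} = {0..<l}"
      using lp unfolding \<phi>_def by auto
    have "L \<subseteq> {0..n}" using L unfolding blocks_def by auto
    from img_interval_plus[OF inj\<phi> this L(2)] show ?thesis using L hp by auto
  next
    case False
    then have hm: "h_minus p < k" using assms(8) by (simp add: H_minus_def)
    obtain bs where bs: "down_decomp p bs" "\<forall>b\<in>set bs. length b < k" using h_minus_blocks[OF isp hm] by blast
    have "\<forall>b\<in>set bs. is_perm b \<and> b \<noteq> [] \<and> length b < k" "p = foldr ominus bs []"
      using bs unfolding down_decomp_def down_indec_def by auto
    from ominus_blocks[OF this] obtain L where L: "blocks L n k" "\<forall>l\<in>L. \<phi> ` {0..<l} = {n - l..<n}"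
      using lp unfolding \<phi>_def by auto
    have "L \<subseteq> {0..n}" using L unfolding blocks_def by auto
    from img_interval_minus[OF inj\<phi> this L(2)] show ?thesis using L hm by auto
  qed
  then obtain L where k: "k \<ge> 1" and bl: "blocks L n k"
    and cs: "(\<forall>a\<in>L. \<forall>b\<in>L. a < b \<longrightarrow> \<phi> ` {a..<b} = {a..<b}) \<or>
          (\<forall>a\<in>L. \<forall>b\<in>L. a < b \<longrightarrow> \<phi> ` {a..<b} = {n - b..<n - a})" by blast
  have Ln: "L \<subseteq> {0..n}" using bl unfolding blocks_def by auto
  have part1: "\<forall>Js. interval_partition X Js \<longrightarrow>
            (\<exists>Is. interval_partition X Is \<and> refines Is Js \<and>
               int (length Is) \<le> int (length Js) + (int k - 1) * (int (length Js) - 1) \<and>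
               (\<forall>I\<in>set Is. is_interval Y (f ` I)))"
  proof (rule side[OF sx sy X Y lx ly assms(5) k bl fg \<phi>r])
    show "\<forall>a\<in>L. \<forall>b\<in>L. a < b \<longrightarrow> (\<exists>c d. c < d \<and> d \<le> n \<and> \<phi> ` {a..<b} = {c..<d})"
    proof (intro ballI impI)
      fix a b assume ab: "a \<in> L" "b \<in> L" "a < b"
      then have bn: "b \<le> n" using Ln by auto
      from cs show "\<exists>c d. c < d \<and> d \<le> n \<and> \<phi> ` {a..<b} = {c..<d}"
      proof
        assume "\<forall>a\<in>L. \<forall>b\<in>L. a < b \<longrightarrow> \<phi> ` {a..<b} = {a..<b}"
        then show ?thesis using ab bn by blast
      next
        assume "\<forall>a\<in>L. \<forall>b\<in>L. a < b \<longrightarrow> \<phi> ` {a..<b} = {n - b..<n - a}"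
        then have "\<phi> ` {a..<b} = {n - b..<n - a}" using ab by blast
        moreover have "n - b < n - a" "n - a \<le> n" using ab bn by auto
        ultimately show ?thesis by blast
      qed
    qed
  qed
  define \<psi> where "\<psi> = inv_into {0..<n} \<phi>"
  have \<psi>r: "\<forall>j<n. \<psi> j < n" and \<phi>\<psi>: "\<forall>j<n. \<phi> (\<psi> j) = j"
  proof -
    have "\<psi> j \<in> {0..<n} \<and> \<phi> (\<psi> j) = j" if "j < n" for j
    proof -
      have "j \<in> \<phi> ` {0..<n}" using im\<phi> that by simp
      then show ?thesis using inv_into_into[of j \<phi> "{0..<n}"] f_inv_into_f[of j \<phi> "{0..<n}"]
        unfolding \<psi>_def by auto
    qed
    then show "\<forall>j<n. \<psi> j < n" "\<forall>j<n. \<phi> (\<psi> j) = j" by auto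
  qed
  have g\<psi>: "\<forall>j<n. inv_into X f (ys!j) = xs!(\<psi> j)"
  proof (intro allI impI)
    fix j assume j: "j < n"
    have "ys!j = f (xs!(\<psi> j))" using fg \<psi>r \<phi>\<psi> j by metis
    moreover have "xs!(\<psi> j) \<in> X" using X lx \<psi>r j by auto
    ultimately show "inv_into X f (ys!j) = xs!(\<psi> j)" using injf by simp
  qed
  have canc: "\<psi> ` (\<phi> ` S) = S" if "S \<subseteq> {0..<n}" for S
    unfolding \<psi>_def by (rule inv_into_image_cancel[OF inj\<phi> that])
  have "\<exists>L'. blocks L' n k \<and> (\<forall>a\<in>L'. \<forall>b\<in>L'. a < b \<longrightarrow> (\<exists>c d. c < d \<and> d \<le> n \<and> \<psi> ` {a..<b} = {c..<d}))"
    using cs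
  proof
    assume h: "\<forall>a\<in>L. \<forall>b\<in>L. a < b \<longrightarrow> \<phi> ` {a..<b} = {a..<b}"
    have "\<exists>c d. c < d \<and> d \<le> n \<and> \<psi> ` {a..<b} = {c..<d}" if ab: "a \<in> L" "b \<in> L" "a < b" for a b
    proof -
      have bn: "b \<le> n" using ab Ln by auto
      have "\<psi> ` {a..<b} = \<psi> ` (\<phi> ` {a..<b})" using h ab by simp
      also have "\<dots> = {a..<b}" using canc bn by simp
      finally show ?thesis using ab bn by blast
    qed
    then show ?thesis using bl by blast
  next
    assume h: "\<forall>a\<in>L. \<forall>b\<in>L. a < b \<longrightarrow> \<phi> ` {a..<b} = {n - b..<n - a}"
    have "\<exists>c d. c < d \<and> d \<le> n \<and> \<psi> ` {a'..<b'} = {c..<d}"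
      if ab': "a' \<in> (\<lambda>l. n - l) ` L" "b' \<in> (\<lambda>l. n - l) ` L" "a' < b'" for a' b'
    proof -
      obtain a b where ab: "b \<in> L" "a \<in> L" "a' = n - b" "b' = n - a" using ab' by blast
      have an: "a \<le> n" "b \<le> n" using ab Ln by auto
      have "a < b" using ab ab' an by linarith
      have "\<psi> ` {a'..<b'} = \<psi> ` (\<phi> ` {a..<b})" using h ab \<open>a < b\<close> by simp
      also have "\<dots> = {a..<b}" using canc an by simp
      finally show ?thesis using \<open>a < b\<close> an by blast
    qed
    then show ?thesis using blocks_flip[OF bl] by blast
  qed
  then obtain L' where bl': "blocks L' n k"
    and iv': "\<forall>a\<in>L'. \<forall>b\<in>L'. a < b \<longrightarrow> (\<exists>c d. c < d \<and> d \<le> n \<and> \<psi> ` {a..<b} = {c..<d})" by blast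
  have part2: "\<forall>Js. interval_partition Y Js \<longrightarrow>
            (\<exists>Is. interval_partition Y Is \<and> refines Is Js \<and>
               int (length Is) \<le> int (length Js) + (int k - 1) * (int (length Js) - 1) \<and>
               (\<forall>I\<in>set Is. is_interval X (inv_into X f ` I)))"
    by (rule side[OF sy sx Y X ly lx assms(5) k bl' g\<psi> \<psi>r iv'])
  show ?thesis using part1 part2 by blast
qed

end
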